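(* Let $G$ be a graph on $d+2$ vertices with adjacency matrix $A_G$ having eigenvalues $\lambda_1\geq\lambda_2\geq\dots\geq\lambda_{d+2}$, and let $\overline{B_G}=\lambda_2 I - A_G$. If $w^T\overline{B_G}w\geq0$ for every $w\in\mathbf{1}^\perp$, then there exist a nonzero vector $w\in\mathbf{1}^\perp$ and a real number $\gamma$ with $\overline{B_G}w=\gamma\mathbf{1}$, and $\det(\overline{B_G})=0$.
   Context: Graphs are finite and simple; $\mathbf{1}$ is the all-ones vector and $\mathbf{1}^\perp$ its orthogonal complement. *)

theory Defs
  imports "HOL-Analysis.Analysis" "HOL-Computational_Algebra.Polynomial"
begin

definition simple_graph :: "('n \<Rightarrow> 'n \<Rightarrow> bool) \<Rightarrow> bool" where
  "simple_graph E \<longleftrightarrow> (\<forall>i j. E i j \<longleftrightarrow> E j i) \<and> (\<forall>i. \<not> E i i)"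

definition adj_matrix :: "('n::finite \<Rightarrow> 'n \<Rightarrow> bool) \<Rightarrow> real^'n^'n" where
  "adj_matrix E = (\<chi> i j. if E i j then 1 else 0)"

definition charpoly :: "real^'n^'n \<Rightarrow> real poly" where
  "charpoly A = det (\<chi> i j. (if i = j then [:0, 1:] else 0) - [:A $ i $ j:])"

definition eigenvalues_desc :: "real^'n^'n \<Rightarrow> real list" where
  "eigenvalues_desc A = rev (sorted_list_of_multiset (proots (charpoly A)))"

text \<open>lambda_2 (the list is 0-indexed).\<close>
definition lambda2 :: "real^'n^'n \<Rightarrow> real" where
  "lambda2 A = eigenvalues_desc A ! 1"

end

theory Submission
  imports Defs "HOL-Computational_Algebra.Fundamental_Theorem_Algebra"
begin


lemma poly_det_gen:
  fixes f :: "'n::finite \<Rightarrow> 'n \<Rightarrow> 'a::comm_ring_1"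
  shows "poly (det (\<chi> i j. (if i = j then [:0,1:] else 0) - [:f i j:])) x
       = det (\<chi> i j. (if i = j then x else 0) - f i j)"
  unfolding det_def by (simp add: poly_sum poly_prod if_distrib[of "\<lambda>p. poly p x"] cong: if_cong)

lemma charpoly_eval': "poly (charpoly A) x = det (\<chi> i j. (if i = j then x else 0) - A$i$j)"
  unfolding charpoly_def poly_det_gen[of "\<lambda>i j. A$i$j"] ..

lemma poly_map_of_real: "poly (map_poly complex_of_real p) (of_real x) = of_real (poly p x)"
  by (induction p) (auto simp: map_poly_pCons)

lemma cpoly_eq_on_reals:
  fixes P Q :: "complex poly"
  assumes "\<And>x::real. poly P (of_real x) = poly Q (of_real x)"
  shows "P = Q"
proof (rule ccontr)
  assume "P \<noteq> Q"
  then have "P - Q \<noteq> 0" by simp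
  then have fin: "finite {z. poly (P - Q) z = 0}" by (rule poly_roots_finite)
  have "range complex_of_real \<subseteq> {z. poly (P - Q) z = 0}" using assms by auto
  with fin have "finite (range complex_of_real)" by (rule finite_subset[rotated])
  moreover have "inj complex_of_real" by (simp add: inj_on_def)
  ultimately have "finite (UNIV::real set)" using finite_imageD by blast
  then show False using infinite_UNIV_char_0 by blast
qed

lemma map_poly_of_real_mult:
  "map_poly complex_of_real (p * q) = map_poly of_real p * map_poly of_real q"
  by (rule cpoly_eq_on_reals) (simp add: poly_map_of_real)

lemma det_of_real: "complex_of_real (det M) = det (\<chi> i j. complex_of_real (M$i$j))"
  unfolding det_def by (simp add: of_real_sum of_real_prod)

lemma charpoly_complex:
  "poly (map_poly complex_of_real (charpoly A)) z = det (\<chi> i j. (if i = j then z else 0) - complex_of_real (A$i$j))"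
proof -
  have "map_poly complex_of_real (charpoly A) = det (\<chi> i j. (if i = j then [:0,1:] else 0) - [:complex_of_real (A$i$j):])"
  proof (rule cpoly_eq_on_reals)
    fix x :: real
    have "(\<chi> i j. complex_of_real ((\<chi> i j. (if i = j then x else 0) - A$i$j) $ i $ j))
       = (\<chi> i j. (if i = j then complex_of_real x else 0) - complex_of_real (A$i$j))"
      by (simp add: vec_eq_iff)
    then show "poly (map_poly complex_of_real (charpoly A)) (of_real x) =
       poly (det (\<chi> i j. (if i = j then [:0,1:] else 0) - [:complex_of_real (A$i$j):])) (of_real x)"
      unfolding poly_map_of_real charpoly_eval' poly_det_gen det_of_real by simp
  qed
  then show ?thesis by (simp add: poly_det_gen)
qed

lemma det0_ker:
  fixes C :: "'a::field^'n^'n"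
  assumes "det C = 0"
  shows "\<exists>x. x \<noteq> 0 \<and> C *v x = 0"
  using assms invertible_det_nz[of C] invertible_left_inverse[of C] matrix_left_invertible_ker[of C]
  by auto

lemma complex_root_real:
  fixes A :: "real^'n^'n"
  assumes sym: "\<And>i j. A$i$j = A$j$i"
    and root: "poly (map_poly complex_of_real (charpoly A)) z = 0"
  shows "Im z = 0"
proof -
  define C where "C = (\<chi> i j. (if i = j then z else 0) - complex_of_real (A$i$j))"
  have "det C = 0" using root unfolding charpoly_complex C_def .
  then obtain x where x0: "x \<noteq> 0" and Cx: "C *v x = 0" using det0_ker by blast
  have ev: "z * x$i = (\<Sum>j\<in>UNIV. of_real (A$i$j) * x$j)" for i
  proof -
    have "0 = (C *v x)$i" using Cx by simp
    also have "\<dots> = (\<Sum>j\<in>UNIV. ((if i = j then z else 0) - of_real (A$i$j)) * x$j)"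
      by (simp add: matrix_vector_mult_def C_def)
    also have "\<dots> = (\<Sum>j\<in>UNIV. (if i = j then z else 0) * x$j) - (\<Sum>j\<in>UNIV. of_real (A$i$j) * x$j)"
      by (simp add: left_diff_distrib sum_subtractf)
    also have "(\<Sum>j\<in>UNIV. (if i = j then z else 0) * x$j) = z * x$i"
    proof -
      have "\<And>j. (if i = j then z else 0) * x$j = (if i = j then z * x$j else 0)" by simp
      then show ?thesis by simp
    qed
    finally show ?thesis by simp
  qed
  define S where "S = (\<Sum>i\<in>UNIV. cnj (x$i) * (\<Sum>j\<in>UNIV. of_real (A$i$j) * x$j))"
  have "cnj S = (\<Sum>i\<in>UNIV. \<Sum>j\<in>UNIV. x$i * (of_real (A$i$j) * cnj (x$j)))"
    by (simp add: S_def sum_distrib_left)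
  also have "\<dots> = (\<Sum>j\<in>UNIV. \<Sum>i\<in>UNIV. x$i * (of_real (A$i$j) * cnj (x$j)))"
    by (rule sum.swap)
  also have "\<dots> = S"
    by (simp add: S_def sum_distrib_left sym mult_ac)
  finally have "cnj S = S" .
  then have ImS: "Im S = 0" 
  proof -
    have a: "Im (cnj S) = - Im S" by simp
    have b: "Im (cnj S) = Im S" by (simp only: \<open>cnj S = S\<close>)
    from a b show ?thesis by linarith
  qed
  define N where "N = (\<Sum>i\<in>UNIV. (Re (x$i))\<^sup>2 + (Im (x$i))\<^sup>2)"
  have cn: "cnj a * a = complex_of_real ((Re a)\<^sup>2 + (Im a)\<^sup>2)" for a
    by (simp add: complex_eq_iff power2_eq_square)
  have "S = (\<Sum>i\<in>UNIV. cnj (x$i) * (z * x$i))"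
    unfolding S_def ev ..
  also have "\<dots> = (\<Sum>i\<in>UNIV. z * complex_of_real ((Re (x$i))\<^sup>2 + (Im (x$i))\<^sup>2))"
    by (intro sum.cong refl) (metis cn mult.commute mult.left_commute)
  also have "\<dots> = z * of_real N"
    by (simp only: N_def of_real_sum sum_distrib_left)
  finally have SN: "S = z * of_real N" .
  obtain k where k: "x$k \<noteq> 0" using x0 by (metis vec_eq_iff zero_index)
  have "0 < (Re (x$k))\<^sup>2 + (Im (x$k))\<^sup>2"
    using k by (simp add: complex_eq_iff sum_power2_gt_zero_iff)
  then have "N > 0" unfolding N_def
    by (intro sum_pos2[of UNIV k]) auto
  moreover have "Im z * N = 0" using ImS SN by simp
  ultimately show ?thesis by simp
qed

lemma coeff_charpoly: "coeff (charpoly (A::real^'n^'n)) CARD('n) = 1"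
proof -
  define M :: "real poly^'n^'n" where "M = (\<chi> i j. (if i = j then [:0,1:] else 0) - [:A$i$j:])"
  define T where "T = (\<lambda>p. of_int (sign p) * (\<Prod>i\<in>UNIV. M$i$p i) :: real poly)"
  have cp: "charpoly A = sum T {p. p permutes (UNIV::'n set)}"
    unfolding charpoly_def det_def T_def M_def ..
  have other: "coeff (T p) CARD('n) = 0" if "p permutes UNIV" "p \<noteq> id" for p
  proof -
    obtain k where k: "p k \<noteq> k" using \<open>p \<noteq> id\<close> by (metis eq_id_iff)
    have dM: "degree (M$i$p i) \<le> (if p i = i then 1 else 0)" for i
      by (auto simp: M_def)
    have "degree (\<Prod>i\<in>UNIV. M$i$p i) \<le> (\<Sum>i\<in>UNIV. degree (M$i$p i))"
      using degree_prod_sum_le[of UNIV "\<lambda>i. M$i$p i"] by (simp add: o_def)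
    also have "\<dots> \<le> (\<Sum>i\<in>UNIV. (if p i = i then 1 else 0::nat))"
      by (rule sum_mono) (use dM in auto)
    also have "\<dots> = card {i. p i = i}"
      by (simp add: sum.If_cases)
    also have "\<dots> < CARD('n)"
      by (rule psubset_card_mono) (use k in auto)
    finally have d: "degree (\<Prod>i\<in>UNIV. M$i$p i) < CARD('n)" .
    have "degree (T p) \<le> degree (\<Prod>i\<in>UNIV. M$i$p i)"
      unfolding T_def by (metis degree_mult_le degree_of_int add_0)
    with d show ?thesis by (intro coeff_eq_0) simp
  qed
  have idT: "T id = (\<Prod>i\<in>UNIV. [:- (A$i$i), 1:])"
    unfolding T_def M_def by (simp add: sign_id)
  have "coeff (T id) CARD('n) = 1"
  proof -
    have nz: "\<And>i. [:- (A$i$i), 1:] \<noteq> 0" by simp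
    have "degree (\<Prod>i\<in>UNIV. [:- (A$i$i), 1:]) = CARD('n)"
      by (subst degree_prod_eq_sum_degree) (auto simp: nz)
    moreover have "lead_coeff (\<Prod>i\<in>UNIV. [:- (A$i$i), 1:]) = 1"
      by (simp add: lead_coeff_prod)
    ultimately show ?thesis unfolding idT by simp
  qed
  moreover have "coeff (charpoly A) CARD('n) = (\<Sum>p\<in>{p. p permutes (UNIV::'n set)}. coeff (T p) CARD('n))"
    unfolding cp by (simp add: coeff_sum)
  moreover have "\<dots> = coeff (T id) CARD('n)"
  proof -
    have "(\<Sum>p\<in>{p. p permutes (UNIV::'n set)}. coeff (T p) CARD('n))
       = coeff (T id) CARD('n) + (\<Sum>p\<in>{p. p permutes (UNIV::'n set)} - {id}. coeff (T p) CARD('n))"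
      by (rule sum.remove) (auto simp: permutes_id)
    also have "(\<Sum>p\<in>{p. p permutes (UNIV::'n set)} - {id}. coeff (T p) CARD('n)) = 0"
      by (rule sum.neutral) (auto simp: other)
    finally show ?thesis by (simp add: id_def)
  qed
  ultimately show ?thesis by simp
qed

lemma two_roots:
  fixes A :: "real^'n^'n"
  assumes sym: "\<And>i j. A$i$j = A$j$i" and n2: "CARD('n) \<ge> 2"
  shows "size (proots (charpoly A)) \<ge> 2"
proof -
  define p where "p = charpoly A"
  have "CARD('n) \<le> degree p" unfolding p_def by (rule le_degree) (simp add: coeff_charpoly)
  with n2 have dp: "degree p \<ge> 2" by simp
  then have p0: "p \<noteq> 0" by auto
  have realroot: "\<exists>r. poly q r = 0"
    if qp: "q dvd p" and dq: "degree q \<ge> 1" for q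
  proof -
    have "degree (map_poly complex_of_real q) = degree q" by (rule degree_map_poly) simp
    with dq have "\<not> constant (poly (map_poly complex_of_real q))" by (simp add: constant_degree)
    then obtain z where z: "poly (map_poly complex_of_real q) z = 0"
      using fundamental_theorem_of_algebra by blast
    from qp obtain k where pk: "p = q * k" by (auto elim: dvdE)
    have "poly (map_poly complex_of_real (charpoly A)) z = 0"
      using z unfolding p_def[symmetric] pk map_poly_of_real_mult by simp
    then have "Im z = 0" by (rule complex_root_real[OF sym])
    then have zr: "z = complex_of_real (Re z)" by (simp add: complex_eq_iff)
    have "complex_of_real (poly q (Re z)) = 0"
      using z zr poly_map_of_real[of q "Re z"] by simp
    then show ?thesis by auto
  qed
  obtain r1 where r1: "poly p r1 = 0" using realroot[of p] dp by auto
  then obtain q where pq: "p = [:-r1,1:] * q" by (auto simp: poly_eq_0_iff_dvd elim: dvdE)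
  have q0: "q \<noteq> 0" using p0 pq by auto
  have "degree ([:-r1,1:] * q) = degree [:-r1,1:] + degree q"
    by (rule degree_mult_eq) (use q0 in auto)
  then have "degree p = 1 + degree q" using pq by simp
  with dp have dq: "degree q \<ge> 1" by simp
  have "q dvd p" unfolding pq by (rule dvd_triv_right)
  then obtain r2 where r2: "poly q r2 = 0" using realroot[of q] dq by blast
  then obtain q2 where qq: "q = [:-r2,1:] * q2" by (auto simp: poly_eq_0_iff_dvd elim: dvdE)
  have q20: "q2 \<noteq> 0" using q0 qq by auto
  have "proots p = {#r1#} + ({#r2#} + proots q2)"
  proof -
    have l: "proots [:-r,1:] = {#r#}" for r :: real using proots_linear_factor[of "-r"] by simp
    have "proots ([:-r1,1:] * ([:-r2,1:] * q2)) = proots [:-r1,1:] + proots ([:-r2,1:] * q2)"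
      by (rule proots_mult) (use q0 qq in auto)
    also have "proots ([:-r2,1:] * q2) = proots [:-r2,1:] + proots q2"
      by (rule proots_mult) (use q20 in auto)
    finally show ?thesis unfolding pq qq l .
  qed
  then show ?thesis unfolding p_def[symmetric] by simp
qed



lemma charpoly_eval: "poly (charpoly A) x = det (x *\<^sub>R mat 1 - A)"
proof -
  have "(\<chi> i j. (if i = j then x else 0) - A$i$j) = x *\<^sub>R mat 1 - A"
    by (simp add: vec_eq_iff mat_def)
  then show ?thesis unfolding charpoly_eval' by simp
qed

lemma symdot:
  fixes B :: "real^'n^'n"
  assumes symB: "\<And>i j. B$i$j = B$j$i"
  shows "x \<bullet> (B *v y) = y \<bullet> (B *v x)"
proof -
  have "x \<bullet> (B *v y) = (\<Sum>i\<in>UNIV. \<Sum>j\<in>UNIV. x$i * (B$i$j * y$j))"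
    by (simp add: inner_vec_def matrix_vector_mult_def sum_distrib_left)
  also have "\<dots> = (\<Sum>j\<in>UNIV. \<Sum>i\<in>UNIV. x$i * (B$i$j * y$j))"
    by (rule sum.swap)
  also have "\<dots> = y \<bullet> (B *v x)"
    by (simp add: inner_vec_def matrix_vector_mult_def sum_distrib_left symB mult_ac)
  finally show ?thesis .
qed

lemma part_c:
  fixes B :: "real^'n^'n" and w :: "real^'n"
  assumes symB: "\<And>i j. B$i$j = B$j$i"
    and psd: "\<And>w. w \<bullet> vec 1 = 0 \<Longrightarrow> 0 \<le> w \<bullet> (B *v w)"
    and w1: "w \<bullet> vec 1 = 0" and wq: "w \<bullet> (B *v w) \<le> 0"
  shows "\<exists>\<gamma>. B *v w = \<gamma> *\<^sub>R vec 1"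
proof -
  have sd: "\<And>x y. x \<bullet> (B *v y) = y \<bullet> (B *v x)" by (rule symdot) (rule symB)
  have wq0: "w \<bullet> (B *v w) = 0" using psd[OF w1] wq by simp
  define N where "N = (vec 1 :: real^'n) \<bullet> vec 1"
  have N: "N = real CARD('n)" by (simp add: N_def inner_vec_def)
  then have Npos: "N > 0" by simp
  define g where "g = (vec 1 \<bullet> (B *v w)) / N"
  define z where "z = B *v w - g *\<^sub>R vec 1"
  have "z \<bullet> vec 1 = (B *v w) \<bullet> vec 1 - g * N" unfolding z_def N_def
    by (simp only: inner_diff_left inner_scaleR_left)
  then have z1: "z \<bullet> vec 1 = 0"
    using Npos by (simp add: g_def inner_commute)
  define a where "a = z \<bullet> (B *v w)"
  define b where "b = z \<bullet> (B *v z)"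
  have quad: "0 \<le> 2*t*a + t\<^sup>2 * b" for t
  proof -
    have "(w + t *\<^sub>R z) \<bullet> vec 1 = 0" using w1 z1 by (simp add: inner_add_left)
    then have "0 \<le> (w + t *\<^sub>R z) \<bullet> (B *v (w + t *\<^sub>R z))" by (rule psd)
    also have "\<dots> = w \<bullet> (B *v w) + 2*t*a + t\<^sup>2*b"
      by (simp add: matrix_vector_right_distrib matrix_vector_mult_scaleR inner_add_left
          inner_add_right a_def b_def sd[of w z] power2_eq_square algebra_simps)
    finally show ?thesis using wq0 by simp
  qed
  have a0: "a = 0"
  proof (rule ccontr)
    assume an: "a \<noteq> 0"
    define c where "c = \<bar>b\<bar> + 1"
    have c0: "c > 0" by (simp add: c_def)
    define t where "t = - a / c"
    have "0 \<le> 2*t*a + t\<^sup>2*b" by (rule quad)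
    moreover have "c\<^sup>2 * (2*t*a + t\<^sup>2*b) = a\<^sup>2 * (b - 2*c)"
      using c0 by (simp add: t_def field_simps power2_eq_square)
    moreover have "a\<^sup>2 * (b - 2*c) < 0"
      using an by (intro mult_pos_neg) (auto simp: c_def)
    ultimately show False using c0
      by (metis mult_nonneg_nonneg not_le zero_le_power2)
  qed
  have Bw: "B *v w = z + g *\<^sub>R vec 1" by (simp add: z_def)
  have "z \<bullet> z = 0" using a0 z1 unfolding a_def Bw by (simp add: inner_add_right)
  then have "z = 0" by simp
  then show ?thesis using Bw by auto
qed



lemma exists_nonpos:
  fixes A :: "real^'n^'n" and l l1 :: real
  assumes symA: "\<And>i j. A$i$j = A$j$i"
    and l1: "l \<le> l1" and r1: "poly (charpoly A) l1 = 0" and r: "poly (charpoly A) l = 0"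
    and mult: "l1 = l \<Longrightarrow> [:-l,1:]^2 dvd charpoly A"
  shows "\<exists>w. w \<noteq> 0 \<and> w \<bullet> vec 1 = 0 \<and> w \<bullet> ((l *\<^sub>R mat 1 - A) *v w) \<le> 0"
proof (rule ccontr)
  define B where "B = l *\<^sub>R mat 1 - A"
  have symB: "\<And>i j. B$i$j = B$j$i" by (simp add: B_def mat_def symA)
  have sd: "\<And>x y. x \<bullet> (B *v y) = y \<bullet> (B *v x)" by (rule symdot) (rule symB)
  assume "\<not> ?thesis"
  then have pd: "w \<bullet> (B *v w) > 0" if "w \<noteq> 0" "w \<bullet> vec 1 = 0" for w
    using that unfolding B_def[symmetric] by force
  have "det B = 0" using r by (simp add: charpoly_eval B_def)
  then obtain v where v0: "v \<noteq> 0" and Bv: "B *v v = 0" using det0_ker by blast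
  have v1: "v \<bullet> vec 1 \<noteq> 0" using pd[OF v0] Bv by auto
  define h where "h x = x - ((x \<bullet> vec 1) / (v \<bullet> vec 1)) *\<^sub>R v" for x
  have h1: "h x \<bullet> vec 1 = 0" for x
  proof -
    have "h x \<bullet> vec 1 = x \<bullet> vec 1 - ((x \<bullet> vec 1) / (v \<bullet> vec 1)) * (v \<bullet> vec 1)"
      unfolding h_def by (simp only: inner_diff_left inner_scaleR_left)
    then show ?thesis using v1 by simp
  qed
  have Bh: "B *v h x = B *v x" for x
    by (simp add: h_def matrix_vector_mult_diff_distrib matrix_vector_mult_scaleR Bv)
  have qh: "x \<bullet> (B *v x) = h x \<bullet> (B *v h x)" for x
  proof -
    have "h x \<bullet> (B *v h x) = h x \<bullet> (B *v x)" by (simp add: Bh)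
    also have "\<dots> = x \<bullet> (B *v x) - ((x \<bullet> vec 1) / (v \<bullet> vec 1)) * (v \<bullet> (B *v x))"
      unfolding h_def by (simp only: inner_diff_left inner_scaleR_left)
    also have "v \<bullet> (B *v x) = 0" using sd[of v x] Bv by simp
    finally show ?thesis by simp
  qed
  have psd: "0 \<le> x \<bullet> (B *v x)" for x
  proof (cases "h x = 0")
    case True then show ?thesis using qh[of x] by simp
  next
    case False then show ?thesis using qh[of x] pd[OF False h1] by simp
  qed
  have ker: "\<exists>c. x = c *\<^sub>R v" if "B *v x = 0" for x
  proof -
    have "h x \<bullet> (B *v h x) = 0" using qh[of x] that by simp
    then have "h x = 0" using pd[OF _ h1, of x] by force
    then show ?thesis unfolding h_def by (metis eq_iff_diff_eq_0)
  qed
  show False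
  proof (cases "l1 = l")
    case False
    with l1 have ll: "l < l1" by simp
    have "det (l1 *\<^sub>R mat 1 - A) = 0" using r1 by (simp add: charpoly_eval)
    then obtain u where u0: "u \<noteq> 0" and u: "(l1 *\<^sub>R mat 1 - A) *v u = 0" using det0_ker by blast
    have Au: "A *v u = l1 *\<^sub>R u"
      using u by (simp add: matrix_vector_mult_diff_rdistrib scaleR_matrix_vector_assoc[symmetric])
    have Bu: "B *v u = (l - l1) *\<^sub>R u"
      by (simp add: B_def matrix_vector_mult_diff_rdistrib scaleR_matrix_vector_assoc[symmetric] Au algebra_simps)
    have "u \<bullet> (B *v u) = (l - l1) * (u \<bullet> u)" by (simp add: Bu)
    moreover have "u \<bullet> u > 0" using u0 by simp
    ultimately have "u \<bullet> (B *v u) < 0" using ll by (simp add: mult_neg_pos)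
    with psd[of u] show False by simp
  next
    case True
    from mult[OF True] obtain q where pr: "charpoly A = [:-l,1:]^2 * q" by (auto elim: dvdE)
    obtain k where vk: "v$k \<noteq> 0" using v0 by (metis vec_eq_iff zero_index)
    define F where "F s = B + s *\<^sub>R mat 1" for s :: real
    define G where "G s = (\<chi> i j. if j = k then v$i else F s$i$j)" for s
    have detF: "det (F s) = s\<^sup>2 * poly q (l + s)" for s
    proof -
      have "F s = (l + s) *\<^sub>R mat 1 - A" by (simp add: F_def B_def algebra_simps scaleR_add_left)
      then have "det (F s) = poly (charpoly A) (l + s)" by (simp add: charpoly_eval)
      also have "\<dots> = s\<^sup>2 * poly q (l + s)" by (simp add: pr)
      finally show ?thesis .
    qed
    have FG: "v$k * det (F s) = s * det (G s)" for s
    proof -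
      have Fv: "F s *v v = s *\<^sub>R v"
        by (simp add: F_def matrix_vector_mult_add_rdistrib Bv scaleR_matrix_vector_assoc[symmetric])
      have "v$k * det (F s) = det (\<chi> i j. if j = k then (F s *v v)$i else F s$i$j)"
        by (rule cramer_lemma[symmetric])
      also have "\<dots> = det (\<chi> i j. if j = k then s * v$i else F s$i$j)" unfolding Fv by (intro arg_cong[where f=det]) (simp add: vec_eq_iff)
      also have "\<dots> = s * det (G s)"
      proof -
        have "det (\<chi> i j. if j = k then s * v$i else F s$i$j)
            = det (transpose (\<chi> i j. if j = k then s * v$i else F s$i$j))" by simp
        also have "transpose (\<chi> i j. if j = k then s * v$i else F s$i$j)
            = (\<chi> i. if i = k then s *s v else column i (F s))"
          by (simp add: vec_eq_iff transpose_def column_def)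
        also have "det \<dots> = s * det (\<chi> i. if i = k then v else column i (F s))"
          by (rule det_row_mul)
        also have "(\<chi> i. if i = k then v else column i (F s)) = transpose (G s)"
          by (simp add: vec_eq_iff transpose_def column_def G_def)
        finally show ?thesis by simp
      qed
      finally show ?thesis .
    qed
    have eqG: "det (G s) = v$k * s * poly q (l + s)" if "s \<noteq> 0" for s
    proof -
      have "s * det (G s) = v$k * det (F s)" using FG[of s] by simp
      also have "\<dots> = s * (v$k * s * poly q (l + s))" by (simp add: detF power2_eq_square)
      finally have "s * det (G s) = s * (v$k * s * poly q (l + s))" .
      then show ?thesis using that by (metis mult_left_cancel)
    qed
    have Fij: "F s $ i $ j = B$i$j + (if i = j then s else 0)" for s i j
      by (simp add: F_def mat_def)
    have Gij: "G s $ i $ j = (if j = k then v$i else B$i$j) + (if j \<noteq> k \<and> i = j then 1 else 0) * s" for s i j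
      by (simp add: G_def Fij)
    have Gexp: "(\<lambda>s. det (G s)) = (\<lambda>s. \<Sum>p\<in>{p. p permutes (UNIV::'n set)}. of_int (sign p) *
        (\<Prod>i\<in>UNIV. (if p i = k then v$i else B$i$(p i)) + (if p i \<noteq> k \<and> i = p i then 1 else 0) * s))"
      by (simp add: det_def Gij)
    have "isCont (\<lambda>s. det (G s)) 0"
      unfolding Gexp by (intro continuous_intros)
    then have lim1: "((\<lambda>s. det (G s)) \<longlongrightarrow> det (G 0)) (at 0)"
      by (simp add: isCont_def)
    have "((\<lambda>s. v$k * s * poly q (l + s)) \<longlongrightarrow> v$k * 0 * poly q (l + 0)) (at 0)"
      by (intro tendsto_intros)
    then have lim0: "((\<lambda>s. v$k * s * poly q (l + s)) \<longlongrightarrow> 0) (at 0)" by simp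
    have ev: "\<forall>\<^sub>F s in at 0. v$k * s * poly q (l + s) = det (G s)"
      by (auto simp: eventually_at_filter eqG)
    have lim2: "((\<lambda>s. det (G s)) \<longlongrightarrow> 0) (at 0)"
      using lim0 tendsto_cong[OF ev] by blast
    have G0: "det (G 0) = 0" using tendsto_unique[OF _ lim1 lim2] by simp
    then obtain x where x0: "x \<noteq> 0" and Gx: "G 0 *v x = 0" using det0_ker by blast
    define x' where "x' = (\<chi> j. if j = k then 0 else x$j)"
    have "G 0 *v x = x$k *\<^sub>R v + B *v x'"
    proof -
      have "(G 0 *v x)$i = (x$k *\<^sub>R v + B *v x')$i" for i
      proof -
        have "(G 0 *v x)$i = (\<Sum>j\<in>UNIV. (if j = k then v$i * x$j else 0) + B$i$j * (if j = k then 0 else x$j))"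
          unfolding matrix_vector_mult_def vec_lambda_beta by (intro sum.cong refl) (simp add: Gij)
        also have "\<dots> = v$i * x$k + (B *v x')$i"
          by (simp add: sum.distrib matrix_vector_mult_def x'_def)
        finally show ?thesis by simp
      qed
      then show ?thesis by (simp add: vec_eq_iff)
    qed
    with Gx have eq: "x$k *\<^sub>R v + B *v x' = 0" by simp
    have "v \<bullet> (B *v x') = 0" using sd[of v x'] Bv by simp
    then have "x$k * (v \<bullet> v) = 0" using arg_cong[OF eq, of "\<lambda>y. v \<bullet> y"]
      by (simp add: inner_add_right)
    then have xk: "x$k = 0" using v0 by simp
    then have "x' = x" by (simp add: x'_def vec_eq_iff)
    with eq xk have "B *v x = 0" by simp
    then obtain c where c: "x = c *\<^sub>R v" using ker by blast
    then have "c * v$k = 0" using xk by simp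
    then have "c = 0" using vk by simp
    then show False using c x0 by simp
  qed
qed



theorem lemma4p6:
  fixes E :: "'n::finite \<Rightarrow> 'n \<Rightarrow> bool" and d :: nat
  assumes "simple_graph E"
    and "CARD('n) = d + 2"
    and "\<forall>w::real^'n. w \<bullet> vec 1 = 0 \<longrightarrow>
           0 \<le> w \<bullet> ((lambda2 (adj_matrix E) *\<^sub>R mat 1 - adj_matrix E) *v w)"
  shows "(\<exists>w::real^'n. w \<noteq> 0 \<and> w \<bullet> vec 1 = 0 \<and>
            (\<exists>\<gamma>::real. (lambda2 (adj_matrix E) *\<^sub>R mat 1 - adj_matrix E) *v w = \<gamma> *\<^sub>R vec 1))
         \<and> det (lambda2 (adj_matrix E) *\<^sub>R mat 1 - adj_matrix E) = 0"
proof -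
  define A where "A = adj_matrix E"
  define l where "l = lambda2 A"
  define B where "B = l *\<^sub>R mat 1 - A"
  have symA: "\<And>i j. A$i$j = A$j$i"
    using assms(1) by (simp add: A_def adj_matrix_def simple_graph_def)
  have symB: "\<And>i j. B$i$j = B$j$i" by (simp add: B_def mat_def symA)
  define p where "p = charpoly A"
  have p0: "p \<noteq> 0" using coeff_charpoly[of A] unfolding p_def by auto
  define s where "s = sorted_list_of_multiset (proots p)"
  define m where "m = length s"
  have ms: "mset s = proots p" by (simp add: s_def)
  have "m = size (proots p)" unfolding m_def using ms by (metis size_mset)
  moreover have "size (proots p) \<ge> 2" unfolding p_def
    by (rule two_roots[OF symA]) (use assms(2) in simp)
  ultimately have m2: "m \<ge> 2" by simp
  have srt: "sorted s" by (simp add: s_def)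
  have L: "eigenvalues_desc A = rev s" by (simp add: eigenvalues_desc_def s_def p_def)
  have l_eq: "l = s ! (m - 2)"
    unfolding l_def lambda2_def L using m2 by (simp add: rev_nth m_def numeral_2_eq_2)
  define l1 where "l1 = s ! (m - 1)"
  have ll1: "l \<le> l1" unfolding l_eq l1_def using srt m2
    by (simp add: sorted_iff_nth_mono m_def)
  have inroot: "poly p (s ! i) = 0" if "i < m" for i
  proof -
    have "s ! i \<in> set s" using that m_def by simp
    then have "s ! i \<in># proots p" using ms by (metis set_mset_mset)
    then show ?thesis using p0 by simp
  qed
  have rl: "poly p l = 0" unfolding l_eq using m2 by (intro inroot) simp
  have rl1: "poly p l1 = 0" unfolding l1_def using m2 by (intro inroot) simp
  have mult: "[:-l,1:]^2 dvd p" if "l1 = l"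
  proof -
    have d: "drop (m - 2) s = [l, l1]"
    proof -
      have "drop (m - 2) s = s ! (m - 2) # drop (Suc (m - 2)) s"
        by (rule Cons_nth_drop_Suc[symmetric]) (use m2 in \<open>simp add: m_def\<close>)
      also have "Suc (m - 2) = m - 1" using m2 by simp
      also have "drop (m - 1) s = s ! (m - 1) # drop (Suc (m - 1)) s"
        by (rule Cons_nth_drop_Suc[symmetric]) (use m2 in \<open>simp add: m_def\<close>)
      also have "Suc (m - 1) = m" using m2 by simp
      also have "drop m s = []" by (simp add: m_def)
      finally show ?thesis by (simp add: l_eq l1_def)
    qed
    have "count (proots p) l = count (mset (take (m - 2) s)) l + count (mset (drop (m - 2) s)) l"
      unfolding ms[symmetric] by (metis append_take_drop_id count_union mset_append)
    also have "count (mset (drop (m - 2) s)) l = 2" unfolding d using that by simp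
    finally have "count (proots p) l \<ge> 2" by simp
    then have "order l p \<ge> 2" using p0 by simp
    then show ?thesis using order_divides by blast
  qed
  obtain w where w0: "w \<noteq> 0" and w1: "w \<bullet> vec 1 = 0" and wq: "w \<bullet> (B *v w) \<le> 0"
    using exists_nonpos[OF symA ll1 rl1[unfolded p_def] rl[unfolded p_def]] mult
    unfolding B_def p_def by blast
  have psd: "\<And>w. w \<bullet> vec 1 = 0 \<Longrightarrow> 0 \<le> w \<bullet> (B *v w)"
    using assms(3) unfolding B_def l_def A_def by blast
  obtain g where "B *v w = g *\<^sub>R vec 1" using part_c[OF symB psd w1 wq] by blast
  moreover have "det B = 0" using rl by (simp add: p_def charpoly_eval B_def)
  ultimately show ?thesis using w0 w1 unfolding B_def l_def A_def by blast
qed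


end
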